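(* Consider the following algorithm, given a positive integer $x$: factor all $n \le x$ using a sieve (an array recording a prime factor of each $n \le x$, from which the factorization is recovered by repeated division and lookup); then for each $n \le x$, compute $\ell = \prod_{p \mid n} p'$ over the distinct primes $p$ dividing $n$, mark $n$ with $0$ if $\gcd(\ell, n') \ne 1$, mark $n$ with $0$ if $n$ is odd and all its prime factors are $\equiv 1 \pmod 4$, and otherwise mark $n$ with $1$. Then this algorithm stores at most $O(x \log\log x)$ integers of size at most $x$ and runs using $O(x \cdot M(\log x) \log\log x)$ bit operations.
   Context: For a positive integer $m$, $m'$ denotes the odd part of $m-1$. $M(k)$ denotes the number of bit operations needed to multiply two $k$-bit integers (assumed to be at least linear in $k$), and a gcd of two $k$-bit integers is computed in $O(M(k)\log k)$ bit operations. $\log$ is the natural logarithm. *)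

theory Defs
  imports Complex_Main "HOL-Computational_Algebra.Primes"
begin

(* Odd part of m (with the convention odd_part 0 = 0), and n' = odd part of n - 1. *)
definition odd_part :: "nat \<Rightarrow> nat" where
  "odd_part m = m div 2 ^ multiplicity (2::nat) m"

definition dash :: "nat \<Rightarrow> nat" where
  "dash n = odd_part (n - 1)"

definition ell :: "nat \<Rightarrow> nat" where
  "ell n = (\<Prod>p\<in>prime_factors n. dash p)"

definition mark :: "nat \<Rightarrow> nat" where
  "mark n = (if gcd (ell n) (dash n) \<noteq> 1 then 0
             else if odd n \<and> (\<forall>p\<in>prime_factors n. p mod 4 = 1) then 0 else 1)"

definition bitlen :: "nat \<Rightarrow> nat" where
  "bitlen n = (LEAST k. n < 2 ^ k)"

(* Primitive operations on integers of k bits. *)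
datatype prim =
    Arith nat   (* addition/subtraction/comparison/shift/bit scan/array read or write, k-bit *)
  | Mult nat
  | Divi nat
  | Gcdop nat

fun prim_cost :: "(nat \<Rightarrow> real) \<Rightarrow> (nat \<Rightarrow> real) \<Rightarrow> (nat \<Rightarrow> real) \<Rightarrow> (nat \<Rightarrow> real)
                    \<Rightarrow> prim \<Rightarrow> real" where
  "prim_cost M A D G (Arith k) = A k"
| "prim_cost M A D G (Mult k) = M k"
| "prim_cost M A D G (Divi k) = D k"
| "prim_cost M A D G (Gcdop k) = G k"

definition trace_cost :: "(nat \<Rightarrow> real) \<Rightarrow> (nat \<Rightarrow> real) \<Rightarrow> (nat \<Rightarrow> real) \<Rightarrow> (nat \<Rightarrow> real)
                    \<Rightarrow> prim list \<Rightarrow> real" where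
  "trace_cost M A D G tr = sum_list (map (prim_cost M A D G) tr)"

(* Sieve of Eratosthenes up to x: initialise an array of x entries; for each p = 2..x,
   test whether the entry is unmarked (i.e. p prime); if so, walk through the multiples
   of p up to x (one addition and one array write each), recording p as a prime factor. *)
definition sieve_trace :: "nat \<Rightarrow> prim list" where
  "sieve_trace x = (let k = bitlen x in
     replicate x (Arith k) @
     concat (map (\<lambda>p. Arith k #
        (if prime p then concat (map (\<lambda>j. [Arith k, Arith k]) [1..<x div p + 1]) else []))
        [2..<x+1]))"

(* Recovering the factorisation of n from the sieve array: one lookup and one division
   per prime factor counted with multiplicity. *)
definition factor_trace :: "nat \<Rightarrow> nat \<Rightarrow> prim list" where
  "factor_trace x n = (let k = bitlen x in
     concat (replicate (size (prime_factorization n)) [Arith k, Divi k]))"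

(* Computing the mark of n: compute n' (bit operations); for each distinct prime p | n,
   compute p' (bit operations), update l := l * p' mod n' (one multiplication, one division),
   test p mod 4 (bit operation); then one gcd(l, n') and one write of the mark. *)
definition mark_trace :: "nat \<Rightarrow> nat \<Rightarrow> prim list" where
  "mark_trace x n = (let k = bitlen x in
     Arith k #
     concat (map (\<lambda>p. [Arith k, Mult k, Divi k, Arith k]) (sorted_list_of_set (prime_factors n)))
     @ [Gcdop k, Arith k])"

definition alg_trace :: "nat \<Rightarrow> prim list" where
  "alg_trace x = sieve_trace x @ concat (map (\<lambda>n. factor_trace x n @ mark_trace x n) [1..<x+1])"

(* A prime factor of n recorded by the sieve (n itself for n \<le> 1). *)
definition spf :: "nat \<Rightarrow> nat" where
  "spf n = (if n \<le> 1 then n else Min (prime_factors n))"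

(* The integers stored by the algorithm: the sieve array, the factorisations
   (prime, exponent) of all n \<le> x, and the marks. *)
definition stored_ints :: "nat \<Rightarrow> nat list" where
  "stored_ints x =
     map spf [1..<x+1]
     @ concat (map (\<lambda>n. concat (map (\<lambda>p. [p, multiplicity p n]) (sorted_list_of_set (prime_factors n))))
                [1..<x+1])
     @ map mark [1..<x+1]"

end

theory Submission
  imports Defs "HOL-Analysis.Analysis"
begin

lemma card_multiples:
  assumes "d > (0::nat)"
  shows "card {m\<in>{1..n}. d dvd m} = n div d"
proof -
  have "{m\<in>{1..n}. d dvd m} = (\<lambda>i. d*i) ` {1..n div d}"
  proof (intro equalityI subsetI)
    fix m assume "m \<in> {m\<in>{1..n}. d dvd m}"
    then obtain i where m: "m = d*i" "1 \<le> m" "m \<le> n" by auto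
    then have "i \<ge> 1" by (cases i) auto
    moreover have "i \<le> n div d"
    proof -
      have "d * i div d \<le> n div d" using m by (intro div_le_mono) auto
      then show ?thesis using assms by simp
    qed
    ultimately show "m \<in> (\<lambda>i. d*i) ` {1..n div d}" using m by auto
  next
    fix m assume "m \<in> (\<lambda>i. d*i) ` {1..n div d}"
    then obtain i where "i \<in> {1..n div d}" "m = d*i" by (rule imageE)
    then have i: "m = d*i" "1 \<le> i" "i \<le> n div d" by auto
    have "d * i \<le> d * (n div d)" using i by simp
    also have "\<dots> \<le> n" by simp
    finally show "m \<in> {m\<in>{1..n}. d dvd m}" using i assms by auto
  qed
  moreover have "inj_on (\<lambda>i. d*i) {1..n div d}" using assms by (auto simp: inj_on_def)
  ultimately show ?thesis by (simp add: card_image)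
qed

lemma sum_ln_pf:
  assumes "m \<ge> (1::nat)"
  shows "(\<Sum>p\<in>prime_factors m. ln (real p)) \<le> ln (real m)"
proof -
  have "(\<Prod>p\<in>prime_factors m. p) \<le> (\<Prod>p\<in>prime_factors m. p ^ multiplicity p m)"
  proof (rule prod_mono)
    fix p assume p: "p \<in> prime_factors m"
    have pr: "prime p" using p by auto
    have "p dvd m" using p by auto
    then have "multiplicity p m \<ge> 1" using prime_multiplicity_gt_zero_iff[of p m] pr assms by simp
    moreover have "p \<ge> 1" using pr prime_gt_0_nat by (simp add: Suc_leI)
    ultimately have "multiplicity p m \<ge> 1" "p \<ge> 1" by auto
    then show "0 \<le> p \<and> p \<le> p ^ multiplicity p m"
      by (metis bot_nat_0.extremum power_increasing power_one_right)
  qed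
  also have "\<dots> = m" using assms by (simp add: prod_prime_factors)
  finally have le0: "(\<Prod>p\<in>prime_factors m. p) \<le> m" .
  have le: "(\<Prod>p\<in>prime_factors m. real p) \<le> real m"
  proof -
    have le1: "real (\<Prod>p\<in>prime_factors m. p) \<le> real m" using le0 by (simp only: of_nat_le_iff)
    then show ?thesis by (simp only: of_nat_prod)
  qed
  have pos: "\<And>p. p \<in> prime_factors m \<Longrightarrow> 0 < real p" using prime_gt_0_nat by auto
  have "(\<Sum>p\<in>prime_factors m. ln (real p)) = ln (\<Prod>p\<in>prime_factors m. real p)"
    using pos by (simp add: ln_prod)
  also have "\<dots> \<le> ln (real m)"
  proof (rule ln_mono)
    show "0 < (\<Prod>p\<in>prime_factors m. real p)" using pos by (intro prod_pos) (auto intro: less_imp_le)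
  qed (use le in auto)
  finally show ?thesis .
qed


lemma sum_lnp_div:
  assumes "n \<ge> (1::nat)"
  shows "(\<Sum>p | prime p \<and> p \<le> n. ln (real p) * real (n div p)) \<le> real n * ln (real n)"
proof -
  have "(\<Sum>m\<in>{1..n}. \<Sum>p\<in>prime_factors m. ln (real p)) \<le> (\<Sum>m\<in>{1..n}. ln (real m))"
    by (rule sum_mono) (auto intro: sum_ln_pf)
  also have "\<dots> \<le> (\<Sum>m\<in>{1..n}. ln (real n))"
    by (rule sum_mono) auto
  also have "\<dots> = real n * ln (real n)" by simp
  finally have 1: "(\<Sum>m\<in>{1..n}. \<Sum>p\<in>prime_factors m. ln (real p)) \<le> real n * ln (real n)" .
  have "(\<Sum>m\<in>{1..n}. \<Sum>p\<in>prime_factors m. ln (real p))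
      = (\<Sum>m\<in>{1..n}. \<Sum>p\<in>{p\<in>{..n}. prime p \<and> p dvd m}. ln (real p))"
  proof (rule sum.cong[OF refl])
    fix m assume m: "m \<in> {1..n}"
    have "prime_factors m = {p\<in>{..n}. prime p \<and> p dvd m}"
    proof -
      have le: "\<And>p. p dvd m \<Longrightarrow> p \<le> n" using m by (meson atLeastAtMost_iff dvd_imp_le le_trans less_le_trans zero_less_one)
      have "prime_factors m = {p. prime p \<and> p dvd m}" using m by (intro prime_factors_dvd) auto
      then show ?thesis using le by auto
    qed
    then show "(\<Sum>p\<in>prime_factors m. ln (real p)) = (\<Sum>p\<in>{p\<in>{..n}. prime p \<and> p dvd m}. ln (real p))"
      by simp
  qed
  also have "\<dots> = (\<Sum>p\<in>{..n}. \<Sum>m\<in>{m\<in>{1..n}. prime p \<and> p dvd m}. ln (real p))"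
    by (rule sum.swap_restrict) auto
  also have "\<dots> = (\<Sum>p\<in>{..n}. if prime p then ln (real p) * real (n div p) else 0)"
  proof (rule sum.cong[OF refl])
    fix p assume "p \<in> {..n}"
    show "(\<Sum>m\<in>{m\<in>{1..n}. prime p \<and> p dvd m}. ln (real p)) = (if prime p then ln (real p) * real (n div p) else 0)"
    proof (cases "prime p")
      case True
      then have "card {m\<in>{1..n}. p dvd m} = n div p" by (intro card_multiples) (simp add: prime_gt_0_nat)
      then show ?thesis using True by simp
    qed simp
  qed
  also have "\<dots> = (\<Sum>p | prime p \<and> p \<le> n. ln (real p) * real (n div p))"
  proof -
    have "{p\<in>{..n}. prime p} = {p. prime p \<and> p \<le> n}" by auto
    then show ?thesis by (simp add: sum.inter_filter[symmetric])
  qed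
  finally show ?thesis using 1 by simp
qed

lemma S_bound:
  assumes "n \<ge> (1::nat)"
  shows "(\<Sum>p | prime p \<and> p \<le> n. ln (real p) / real p) \<le> 2 * ln (real n)"
proof -
  have "(\<Sum>p | prime p \<and> p \<le> n. ln (real p) / real p) * (real n / 2)
      = (\<Sum>p | prime p \<and> p \<le> n. ln (real p) * (real n / (2 * real p)))"
    by (simp add: sum_distrib_right)
  also have "\<dots> \<le> (\<Sum>p | prime p \<and> p \<le> n. ln (real p) * real (n div p))"
  proof (rule sum_mono)
    fix p assume p: "p \<in> {p. prime p \<and> p \<le> n}"
    then have p0: "p > 0" by (auto simp: prime_gt_0_nat)
    have q1: "n div p \<ge> 1" using p p0 by (simp add: div_greater_zero_iff Suc_leI)
    have e: "n = p * (n div p) + n mod p" by simp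
    have r: "n mod p < p" using p0 by simp
    have "n < p * (n div p) + p" using e r by linarith
    then have "n < p * (n div p + 1)" by (simp add: algebra_simps)
    then have "real n < real (p * (n div p + 1))" by (simp only: of_nat_less_iff)
    then have "real n < real p * (real (n div p) + 1)" by (simp add: algebra_simps)
    also have "\<dots> \<le> real p * (2 * real (n div p))" using q1 by (intro mult_left_mono) auto
    finally have "real n / (2 * real p) \<le> real (n div p)" using p0 by (simp add: field_simps)
    moreover have "ln (real p) \<ge> 0" using p0 by simp
    ultimately show "ln (real p) * (real n / (2 * real p)) \<le> ln (real p) * real (n div p)"
      by (intro mult_left_mono) auto
  qed
  also have "\<dots> \<le> real n * ln (real n)" by (rule sum_lnp_div[OF assms])
  also have "\<dots> = (2 * ln (real n)) * (real n / 2)" by simp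
  finally have "(\<Sum>p | prime p \<and> p \<le> n. ln (real p) / real p) * (real n / 2) \<le> (2 * ln (real n)) * (real n / 2)" .
  then show ?thesis by (rule mult_right_le_imp_le) (use assms in auto)
qed


lemma key_ineq:
  fixes a b s :: real
  assumes "0 < a" "a \<le> b" "0 \<le> s" "s \<le> 2 * a"
  shows "s / a - s / b \<le> 2 * (ln b - ln a)"
proof -
  have b0: "0 < b" using assms by linarith
  have "s / a - s / b = s * (b - a) / (a * b)" using assms b0 by (simp add: field_simps)
  also have "\<dots> \<le> 2 * a * (b - a) / (a * b)"
    using assms b0 by (intro divide_right_mono mult_right_mono) auto
  also have "\<dots> = 2 * (1 - a / b)" using assms b0 by (simp add: field_simps)
  also have "\<dots> \<le> 2 * (ln b - ln a)"
  proof -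
    have "ln (a / b) \<le> a / b - 1" using assms b0 by (intro ln_le_minus_one) auto
    moreover have "ln (a / b) = ln a - ln b" using assms b0 by (simp add: ln_div)
    ultimately show ?thesis by simp
  qed
  finally show ?thesis .
qed

lemma sumP_Suc:
  "(\<Sum>p | prime p \<and> p \<le> Suc x. f p) = (\<Sum>p | prime p \<and> p \<le> x. f p) + (if prime (Suc x) then f (Suc x) else 0)"
proof -
  have fin: "finite {p. prime p \<and> p \<le> x}" by (rule finite_subset[of _ "{..x}"]) auto
  show ?thesis
  proof (cases "prime (Suc x)")
    case True
    then have "{p. prime p \<and> p \<le> Suc x} = insert (Suc x) {p. prime p \<and> p \<le> x}" by (auto simp: le_Suc_eq)
    then show ?thesis using True fin by (simp add: add.commute)
  next
    case False
    then have "{p. prime p \<and> p \<le> Suc x} = {p. prime p \<and> p \<le> x}" using le_Suc_eq by auto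
    then show ?thesis using False by simp
  qed
qed

lemma T_bound:
  assumes "x \<ge> (2::nat)"
  shows "(\<Sum>p | prime p \<and> p \<le> x. 1 / real p)
    \<le> (\<Sum>p | prime p \<and> p \<le> x. ln (real p) / real p) / ln (real x) + 2 * (ln (ln (real x)) - ln (ln 2))"
  using assms
proof (induction x rule: nat_induct_at_least)
  case base
  have "{p. prime p \<and> p \<le> (2::nat)} = {2}"
    using prime_ge_2_nat by (auto intro: antisym)
  then show ?case by simp
next
  case (Suc x)
  define S where "S = (\<Sum>p | prime p \<and> p \<le> x. ln (real p) / real p)"
  define d where "d = (if prime (Suc x) then ln (real (Suc x)) / real (Suc x) else 0)"
  have lx: "0 < ln (real x)" using Suc.hyps by simp
  have lx1: "ln (real x) \<le> ln (real (Suc x))" using Suc.hyps by simp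
  have lx1p: "0 < ln (real (Suc x))" using Suc.hyps by simp
  have S0: "0 \<le> S" unfolding S_def
  proof (intro sum_nonneg)
    fix p assume "p \<in> {p. prime p \<and> p \<le> x}"
    then have "p \<ge> 1" using prime_gt_0_nat by (auto simp: Suc_le_eq)
    then show "0 \<le> ln (real p) / real p" by simp
  qed
  have S2: "S \<le> 2 * ln (real x)" unfolding S_def using Suc.hyps by (intro S_bound) auto
  have T1: "(\<Sum>p | prime p \<and> p \<le> Suc x. 1 / real p) = (\<Sum>p | prime p \<and> p \<le> x. 1 / real p) + d / ln (real (Suc x))"
    unfolding sumP_Suc d_def using lx1p by auto
  have S1: "(\<Sum>p | prime p \<and> p \<le> Suc x. ln (real p) / real p) = S + d"
    unfolding sumP_Suc S_def d_def by simp
  have K: "S / ln (real x) - S / ln (real (Suc x)) \<le> 2 * (ln (ln (real (Suc x))) - ln (ln (real x)))"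
    by (rule key_ineq) (use lx lx1 S0 S2 in auto)
  have "(\<Sum>p | prime p \<and> p \<le> Suc x. 1 / real p) \<le> S / ln (real x) + 2 * (ln (ln (real x)) - ln (ln 2)) + d / ln (real (Suc x))"
    using T1 Suc.IH unfolding S_def by simp
  also have "\<dots> \<le> (S + d) / ln (real (Suc x)) + 2 * (ln (ln (real (Suc x))) - ln (ln 2))"
    using K by (simp add: add_divide_distrib)
  finally show ?case using S1 by simp
qed

lemma T_bound2:
  assumes "x \<ge> (2::nat)"
  shows "(\<Sum>p | prime p \<and> p \<le> x. 1 / real p) \<le> 2 + 2 * ln (ln (real x)) - 2 * ln (ln 2)"
proof -
  have "(\<Sum>p | prime p \<and> p \<le> x. ln (real p) / real p) / ln (real x) \<le> 2"
    using S_bound[of x] assms by (simp add: divide_le_eq)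
  then show ?thesis using T_bound[OF assms] by simp
qed

lemma size_pf: "size (prime_factorization (n::nat)) = (\<Sum>p\<in>prime_factors n. multiplicity p n)"
proof -
  have "size (prime_factorization n) = (\<Sum>p\<in>prime_factors n. count (prime_factorization n) p)"
    by (simp add: size_multiset_overloaded_eq)
  also have "\<dots> = (\<Sum>p\<in>prime_factors n. multiplicity p n)"
  proof (intro sum.cong refl)
    fix p assume "p \<in> prime_factors n"
    then have "prime p" by auto
    then show "count (prime_factorization n) p = multiplicity p n"
      by (simp add: count_prime_factorization_prime)
  qed
  finally show ?thesis .
qed

lemma pf_sub:
  assumes "(n::nat) \<in> {1..x}"
  shows "prime_factors n = {p. prime p \<and> p \<le> x \<and> p dvd n}"
proof -
  have le: "p \<le> x" if "p dvd n" for p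
  proof -
    have "p \<le> n" using assms that by (intro dvd_imp_le) auto
    then show "p \<le> x" using assms by auto
  qed
  have "prime_factors n = {p. prime p \<and> p dvd n}" using assms by (intro prime_factors_dvd) auto
  then show ?thesis using le by auto
qed

lemma finP: "finite {p. prime p \<and> p \<le> (x::nat)}"
  by (rule finite_subset[of _ "{..x}"]) auto

lemma omega_sum:
  "(\<Sum>n=1..x. card (prime_factors n)) = (\<Sum>p | prime p \<and> p \<le> x. x div p)"
proof -
  have "(\<Sum>n=1..x. card (prime_factors n)) = (\<Sum>n\<in>{1..x}. \<Sum>p\<in>{p\<in>{..x}. prime p \<and> p dvd n}. 1)"
  proof (rule sum.cong[OF refl])
    fix n assume n: "n \<in> {1..x}"
    have "prime_factors n = {p\<in>{..x}. prime p \<and> p dvd n}" unfolding pf_sub[OF n] by auto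
    then show "card (prime_factors n) = (\<Sum>p\<in>{p\<in>{..x}. prime p \<and> p dvd n}. 1)" by simp
  qed
  also have "\<dots> = (\<Sum>p\<in>{..x}. \<Sum>n\<in>{n\<in>{1..x}. prime p \<and> p dvd n}. 1)"
    by (rule sum.swap_restrict) auto
  also have "\<dots> = (\<Sum>p\<in>{..x}. if prime p then x div p else 0)"
  proof (rule sum.cong[OF refl])
    fix p assume "p \<in> {..x}"
    show "(\<Sum>n\<in>{n\<in>{1..x}. prime p \<and> p dvd n}. 1) = (if prime p then x div p else 0)"
    proof (cases "prime p")
      case True
      then have "card {m\<in>{1..x}. p dvd m} = x div p" by (intro card_multiples) (simp add: prime_gt_0_nat)
      then show ?thesis using True by simp
    qed simp
  qed
  also have "\<dots> = (\<Sum>p | prime p \<and> p \<le> x. x div p)"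
  proof -
    have "{p\<in>{..x}. prime p} = {p. prime p \<and> p \<le> x}" by auto
    then show ?thesis by (simp add: sum.inter_filter[symmetric])
  qed
  finally show ?thesis .
qed

lemma mult_card:
  assumes "(n::nat) \<in> {1..x}" "prime p"
  shows "multiplicity p n = card {k\<in>{1..x}. p ^ k dvd n}"
proof -
  have n0: "n \<noteq> 0" using assms by auto
  have nu: "\<not> is_unit p" using assms by auto
  have iff: "\<And>k. p ^ k dvd n \<longleftrightarrow> k \<le> multiplicity p n"
    using power_dvd_iff_le_multiplicity[OF n0 nu] by blast
  have "p ^ multiplicity p n dvd n" by (simp add: multiplicity_dvd)
  then have "p ^ multiplicity p n \<le> n" using n0 by (intro dvd_imp_le) auto
  moreover have "multiplicity p n < 2 ^ multiplicity p n" by (rule less_exp)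
  moreover have "2 ^ multiplicity p n \<le> p ^ multiplicity p n"
    using assms(2) prime_ge_2_nat by (intro power_mono) auto
  ultimately have "multiplicity p n \<le> n" by linarith
  then have "multiplicity p n \<le> x" using assms(1) by auto
  then have "{k\<in>{1..x}. p ^ k dvd n} = {1..multiplicity p n}"
  proof -
    assume mx: "multiplicity p n \<le> x"
    have "{k\<in>{1..x}. p ^ k dvd n} = {k\<in>{1..x}. k \<le> multiplicity p n}" using iff by blast
    also have "\<dots> = {1..multiplicity p n}" using mx by auto
    finally show ?thesis .
  qed
  then show ?thesis by simp
qed

lemma geo_bound:
  assumes "(p::nat) \<ge> 2"
  shows "(\<Sum>k=1..K. 1 / real p ^ k) \<le> 2 / real p - 2 / (real p * 2 ^ K)"
proof (induction K)
  case 0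
  then show ?case by simp
next
  case (Suc K)
  have "real p ^ K \<ge> 2 ^ K" using assms by (intro power_mono) auto
  then have "1 / real p ^ Suc K \<le> 1 / (real p * 2 ^ K)" using assms
    by (intro divide_left_mono) (auto simp: mult_left_mono)
  also have "\<dots> = 2 / (real p * 2 ^ K) - 2 / (real p * 2 ^ Suc K)" by (simp add: field_simps)
  finally have h: "1 / real p ^ Suc K \<le> 2 / (real p * 2 ^ K) - 2 / (real p * 2 ^ Suc K)" .
  have "(\<Sum>k=1..Suc K. 1 / real p ^ k) = (\<Sum>k=1..K. 1 / real p ^ k) + 1 / real p ^ Suc K" by simp
  with Suc.IH h show ?case by linarith
qed

lemma Omega_p:
  assumes "prime p"
  shows "real (\<Sum>n=1..x. multiplicity p n) \<le> 2 * real x / real p"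
proof -
  have "(\<Sum>n=1..x. multiplicity p n) = (\<Sum>n\<in>{1..x}. \<Sum>k\<in>{1..x}. if p ^ k dvd n then 1 else 0)"
  proof (rule sum.cong[OF refl])
    fix n assume n: "n \<in> {1..x}"
    show "multiplicity p n = (\<Sum>k\<in>{1..x}. if p ^ k dvd n then 1 else 0)"
      by (simp add: mult_card[OF n assms] sum.inter_filter[symmetric])
  qed
  also have "\<dots> = (\<Sum>k\<in>{1..x}. \<Sum>n\<in>{1..x}. if p ^ k dvd n then 1 else 0)"
    by (rule sum.swap)
  also have "\<dots> = (\<Sum>k\<in>{1..x}. x div p ^ k)"
  proof (rule sum.cong[OF refl])
    fix k assume "k \<in> {1..x}"
    have "card {m\<in>{1..x}. p ^ k dvd m} = x div p ^ k"
      using assms by (intro card_multiples) (simp add: prime_gt_0_nat)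
    then show "(\<Sum>n\<in>{1..x}. if p ^ k dvd n then 1 else 0) = x div p ^ k"
      by (simp add: sum.inter_filter[symmetric])
  qed
  finally have eq: "real (\<Sum>n=1..x. multiplicity p n) = (\<Sum>k\<in>{1..x}. real (x div p ^ k))" by simp
  also have "\<dots> \<le> (\<Sum>k\<in>{1..x}. real x * (1 / real p ^ k))"
  proof (rule sum_mono)
    fix k assume "k \<in> {1..x}"
    have "real (x div p ^ k) \<le> real x / real (p ^ k)" by (rule of_nat_div_le_of_nat)
    then show "real (x div p ^ k) \<le> real x * (1 / real p ^ k)" by simp
  qed
  also have "\<dots> = real x * (\<Sum>k\<in>{1..x}. 1 / real p ^ k)" by (simp add: sum_distrib_left)
  also have "\<dots> \<le> real x * (2 / real p)"
  proof (rule mult_left_mono)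
    have p2: "p \<ge> 2" using assms prime_ge_2_nat by auto
    have "0 \<le> 2 / (real p * 2 ^ x)" by simp
    then show "(\<Sum>k\<in>{1..x}. 1 / real p ^ k) \<le> 2 / real p" using geo_bound[OF p2, of x] by linarith
  qed simp
  also have "\<dots> = 2 * real x / real p" by simp
  finally show ?thesis .
qed

lemma Omega_sum:
  "real (\<Sum>n=1..x. size (prime_factorization n)) \<le> 2 * real x * (\<Sum>p | prime p \<and> p \<le> x. 1 / real p)"
proof -
  have "(\<Sum>n=1..x. size (prime_factorization n)) = (\<Sum>n\<in>{1..x}. \<Sum>p | prime p \<and> p \<le> x. multiplicity p n)"
  proof (rule sum.cong[OF refl])
    fix n assume n: "n \<in> {1..x}"
    have "size (prime_factorization n) = (\<Sum>p\<in>prime_factors n. multiplicity p n)" by (rule size_pf)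
    also have "\<dots> = (\<Sum>p | prime p \<and> p \<le> x. multiplicity p n)"
    proof (rule sum.mono_neutral_left[OF finP])
      have pfe: "prime_factors n = {p. prime p \<and> p \<le> x \<and> p dvd n}" by (rule pf_sub[OF n])
      show "prime_factors n \<subseteq> {p. prime p \<and> p \<le> x}" unfolding pfe by blast
      show "\<forall>i\<in>{p. prime p \<and> p \<le> x} - prime_factors n. multiplicity i n = 0"
      proof
        fix i assume i: "i \<in> {p. prime p \<and> p \<le> x} - prime_factors n"
        then have "i \<in> {p. prime p \<and> p \<le> x} - {p. prime p \<and> p \<le> x \<and> p dvd n}" by (simp only: pfe)
        then have "\<not> i dvd n" by blast
        then show "multiplicity i n = 0" by (rule not_dvd_imp_multiplicity_0)
      qed
    qed
    finally show "size (prime_factorization n) = (\<Sum>p | prime p \<and> p \<le> x. multiplicity p n)" .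
  qed
  also have "\<dots> = (\<Sum>p | prime p \<and> p \<le> x. \<Sum>n=1..x. multiplicity p n)" by (rule sum.swap)
  finally have eqn: "(\<Sum>n=1..x. size (prime_factorization n)) = (\<Sum>p | prime p \<and> p \<le> x. \<Sum>n=1..x. multiplicity p n)" .
  have "real (\<Sum>n=1..x. size (prime_factorization n)) = (\<Sum>p | prime p \<and> p \<le> x. real (\<Sum>n=1..x. multiplicity p n))"
    unfolding eqn by (rule of_nat_sum)
  also have "\<dots> \<le> (\<Sum>p | prime p \<and> p \<le> x. 2 * real x * (1 / real p))"
  proof (rule sum_mono)
    fix p assume "p \<in> {p. prime p \<and> p \<le> x}"
    then have "prime p" by simp
    from Omega_p[OF this, of x] show "real (\<Sum>n=1..x. multiplicity p n) \<le> 2 * real x * (1 / real p)" by simp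
  qed
  also have "\<dots> = 2 * real x * (\<Sum>p | prime p \<and> p \<le> x. 1 / real p)" by (simp add: sum_distrib_left)
  finally show ?thesis .
qed

lemma omega_sum_real:
  "real (\<Sum>n=1..x. card (prime_factors n)) \<le> real x * (\<Sum>p | prime p \<and> p \<le> x. 1 / real p)"
proof -
  have "real (\<Sum>n=1..x. card (prime_factors n)) = (\<Sum>p | prime p \<and> p \<le> x. real (x div p))"
    by (subst omega_sum) simp
  also have "\<dots> \<le> (\<Sum>p | prime p \<and> p \<le> x. real x * (1 / real p))"
    by (rule sum_mono) (simp add: of_nat_div_le_of_nat)
  also have "\<dots> = real x * (\<Sum>p | prime p \<and> p \<le> x. 1 / real p)" by (simp add: sum_distrib_left)
  finally show ?thesis .
qed

lemma sl_concat: "sum_list (map f (concat xss)) = sum_list (map (\<lambda>xs. sum_list (map f xs)) xss)"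
  by (induction xss) auto

lemma sl_replicate: "sum_list (map f (replicate n a)) = of_nat n * f a"
  by (induction n) (auto simp: algebra_simps)

lemma sl_rep2: "sum_list (replicate n (a::real)) = real n * a"
  by (induction n) (auto simp: algebra_simps)

lemma sl_const: "sum_list (map (\<lambda>_. (a::real)) xs) = real (length xs) * a"
  by (induction xs) (auto simp: algebra_simps)

lemma sl_upt: "sum_list (map f [m..<n]) = sum f {m..<n}"
  by (simp add: interv_sum_list_conv_sum_set_nat)

context
  fixes w :: "prim \<Rightarrow> real" and k :: nat and c g :: real
  assumes wA: "w (Arith k) = c" and wM: "w (Mult k) = c" and wD: "w (Divi k) = c" and wG: "w (Gcdop k) = g"
begin

lemma w_sieve_p:
  "sum_list (map w (Arith k # (if prime p then concat (map (\<lambda>j. [Arith k, Arith k]) [1..<x div p + 1]) else [])))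
    = c + (if prime p then 2 * real (x div p) * c else 0)"
  by (simp add: sl_concat sl_const wA)

lemma w_sieve_p2:
  "sum_list (map w (if prime p then concat (map (\<lambda>j. [Arith k, Arith k]) [1..<x div p + 1]) else []))
    = (if prime p then 2 * real (x div p) * c else 0)"
  by (simp add: sl_concat sl_const wA)

lemma w_sieve:
  assumes "bitlen x = k"
  shows "sum_list (map w (sieve_trace x)) = real x * c + (\<Sum>p\<in>{2..<x+1}. c + (if prime p then 2 * real (x div p) * c else 0))"
proof -
  have "sum_list (map w (sieve_trace x)) = real x * c + sum_list (map (\<lambda>p. c + (if prime p then 2 * real (x div p) * c else 0)) [2..<x+1])"
    using assms by (simp add: sieve_trace_def Let_def sl_concat sl_replicate sl_rep2 sl_const wA o_def w_sieve_p w_sieve_p2 del: upt_Suc)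
  then show ?thesis by (simp only: sl_upt)
qed

lemma w_factor:
  assumes "bitlen x = k"
  shows "sum_list (map w (factor_trace x n)) = real (size (prime_factorization n)) * (2 * c)"
  using assms by (simp add: factor_trace_def Let_def sl_concat sl_replicate sl_rep2 wA wD)

lemma w_mark:
  assumes "bitlen x = k"
  shows "sum_list (map w (mark_trace x n)) = 2 * c + g + real (card (prime_factors n)) * (4 * c)"
  using assms by (simp add: mark_trace_def Let_def sl_concat wA wD wM wG sl_const)

lemma w_alg:
  assumes "bitlen x = k"
  shows "sum_list (map w (alg_trace x)) = real x * c + (\<Sum>p\<in>{2..<x+1}. c + (if prime p then 2 * real (x div p) * c else 0))
     + (\<Sum>n=1..x. real (size (prime_factorization n)) * (2 * c) + (2 * c + g + real (card (prime_factors n)) * (4 * c)))"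
proof -
  have "sum_list (map w (alg_trace x)) = sum_list (map w (sieve_trace x))
     + sum_list (map (\<lambda>n. real (size (prime_factorization n)) * (2 * c) + (2 * c + g + real (card (prime_factors n)) * (4 * c))) [1..<x+1])"
    using assms by (simp add: alg_trace_def sl_concat o_def w_factor w_mark del: upt_Suc)
  also have "\<dots> = real x * c + (\<Sum>p\<in>{2..<x+1}. c + (if prime p then 2 * real (x div p) * c else 0))
     + (\<Sum>n\<in>{1..<x+1}. real (size (prime_factorization n)) * (2 * c) + (2 * c + g + real (card (prime_factors n)) * (4 * c)))"
    by (simp only: sl_upt w_sieve[OF assms])
  also have "{1..<x+1} = {1..x}" by auto
  finally show ?thesis .
qed

end

lemma sieve_sum_bound:
  "(\<Sum>p | prime p \<and> p \<le> x. real (x div p)) \<le> real x * (\<Sum>p | prime p \<and> p \<le> x. 1 / real p)"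
proof -
  have "(\<Sum>p | prime p \<and> p \<le> x. real (x div p)) \<le> (\<Sum>p | prime p \<and> p \<le> x. real x * (1 / real p))"
    by (rule sum_mono) (simp add: of_nat_div_le_of_nat)
  also have "\<dots> = real x * (\<Sum>p | prime p \<and> p \<le> x. 1 / real p)" by (simp add: sum_distrib_left)
  finally show ?thesis .
qed

lemma alg_bound:
  assumes "c \<ge> 0"
  shows "real x * c + (\<Sum>p\<in>{2..<x+1}. c + (if prime p then 2 * real (x div p) * c else 0))
     + (\<Sum>n=1..x. real (size (prime_factorization n)) * (2 * c) + (2 * c + g + real (card (prime_factors n)) * (4 * c)))
     \<le> 4 * real x * c + 10 * c * real x * (\<Sum>p | prime p \<and> p \<le> x. 1 / real p) + g * real x"
proof -
  define T where "T = (\<Sum>p | prime p \<and> p \<le> x. 1 / real p)"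
  have s1: "(\<Sum>p\<in>{2..<x+1}. c + (if prime p then 2 * real (x div p) * c else 0))
      = real (x - 1) * c + 2 * c * (\<Sum>p | prime p \<and> p \<le> x. real (x div p))"
  proof -
    have "(\<Sum>p\<in>{2..<x+1}. c + (if prime p then 2 * real (x div p) * c else 0))
        = (\<Sum>p\<in>{2..<x+1}. c) + (\<Sum>p\<in>{2..<x+1}. (if prime p then 2 * real (x div p) * c else 0))"
      by (rule sum.distrib)
    also have "(\<Sum>p\<in>{2..<x+1}. (if prime p then 2 * real (x div p) * c else 0)) = (\<Sum>p\<in>{p\<in>{2..<x+1}. prime p}. 2 * real (x div p) * c)"
      by (rule sum.inter_filter[symmetric]) simp
    also have "{p\<in>{2..<x+1}. prime p} = {p. prime p \<and> p \<le> x}"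
      using prime_ge_2_nat by auto
    also have "(\<Sum>p | prime p \<and> p \<le> x. 2 * real (x div p) * c) = 2 * c * (\<Sum>p | prime p \<and> p \<le> x. real (x div p))"
      by (simp add: sum_distrib_left mult_ac)
    finally show ?thesis by simp
  qed
  have s2: "(\<Sum>n=1..x. real (size (prime_factorization n)) * (2 * c) + (2 * c + g + real (card (prime_factors n)) * (4 * c)))
     = 2 * c * real (\<Sum>n=1..x. size (prime_factorization n)) + real x * (2 * c + g) + 4 * c * real (\<Sum>n=1..x. card (prime_factors n))"
    by (simp add: sum.distrib sum_distrib_left sum_distrib_right mult_ac)
  have b1: "(\<Sum>p | prime p \<and> p \<le> x. real (x div p)) \<le> real x * T" unfolding T_def by (rule sieve_sum_bound)
  have b2: "real (\<Sum>n=1..x. size (prime_factorization n)) \<le> 2 * real x * T" unfolding T_def by (rule Omega_sum)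
  have b3: "real (\<Sum>n=1..x. card (prime_factors n)) \<le> real x * T" unfolding T_def by (rule omega_sum_real)
  have b0: "real (x - 1) \<le> real x" by simp
  have "2 * c * (\<Sum>p | prime p \<and> p \<le> x. real (x div p)) \<le> 2 * c * (real x * T)"
    using b1 assms by (intro mult_left_mono) auto
  moreover have "2 * c * real (\<Sum>n=1..x. size (prime_factorization n)) \<le> 2 * c * (2 * real x * T)"
    using b2 assms by (intro mult_left_mono) auto
  moreover have "4 * c * real (\<Sum>n=1..x. card (prime_factors n)) \<le> 4 * c * (real x * T)"
    using b3 assms by (intro mult_left_mono) auto
  moreover have "real (x - 1) * c \<le> real x * c" using b0 assms by (intro mult_right_mono) auto
  ultimately show ?thesis unfolding s1 s2 T_def[symmetric] by (simp add: algebra_simps)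
qed

lemma len_concat_map: "length (concat (map f xs)) = sum_list (map (\<lambda>x. length (f x)) xs)"
  by (induction xs) auto

lemma len_stored: "length (stored_ints x) = 2 * x + 2 * (\<Sum>n=1..x. card (prime_factors n))"
proof -
  have l: "length (concat (map (\<lambda>p. [p, multiplicity p n]) (sorted_list_of_set (prime_factors n)))) = 2 * card (prime_factors n)" for n
    by (simp only: len_concat_map) (simp add: sum_list_triv)
  have "length (stored_ints x) = x + length (concat (map (\<lambda>n. concat (map (\<lambda>p. [p, multiplicity p n]) (sorted_list_of_set (prime_factors n)))) [1..<x+1])) + x"
    by (simp add: stored_ints_def del: upt_Suc)
  also have "\<dots> = x + sum_list (map (\<lambda>n. 2 * card (prime_factors n)) [1..<x+1]) + x"
    by (subst len_concat_map) (simp only: l)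
  also have "\<dots> = x + (\<Sum>n\<in>{1..<x+1}. 2 * card (prime_factors n)) + x" by (simp only: sl_upt)
  also have "{1..<x+1} = {1..x}" by auto
  finally show ?thesis by (simp add: sum_distrib_left)
qed

lemma mult_le: "n \<ge> 1 \<Longrightarrow> prime p \<Longrightarrow> multiplicity p n \<le> (n::nat)"
proof -
  assume n: "n \<ge> 1" and pr: "prime p"
  have "p ^ multiplicity p n dvd n" by (simp add: multiplicity_dvd)
  then have "p ^ multiplicity p n \<le> n" using n by (intro dvd_imp_le) auto
  moreover have "multiplicity p n < 2 ^ multiplicity p n" by (rule less_exp)
  moreover have "2 ^ multiplicity p n \<le> p ^ multiplicity p n"
    using pr prime_ge_2_nat by (intro power_mono) auto
  ultimately show "multiplicity p n \<le> n" by linarith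
qed

lemma pf_le: "p \<in> prime_factors n \<Longrightarrow> n \<ge> 1 \<Longrightarrow> p \<le> (n::nat)"
  by (intro dvd_imp_le) auto

lemma spf_le: "n \<ge> 1 \<Longrightarrow> spf n \<le> n"
proof (cases "n \<le> 1")
  case False
  assume n: "n \<ge> 1"
  obtain p where p: "prime p" "p dvd n" using False prime_factor_nat[of n] by auto
  have "p \<in> prime_factors n" using p n by (auto simp: in_prime_factors_iff)
  then have ne: "prime_factors n \<noteq> {}" by auto
  have "Min (prime_factors n) \<in> prime_factors n" using ne by (intro Min_in) auto
  then have "Min (prime_factors n) \<le> n" using n by (rule pf_le)
  then show ?thesis using False unfolding spf_def by simp
qed (simp add: spf_def)

lemma stored_le: "v \<in> set (stored_ints x) \<Longrightarrow> v \<le> x"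
proof -
  assume v: "v \<in> set (stored_ints x)"
  then consider (a) n where "n \<in> {1..x}" "v = spf n"
    | (b) n p where "n \<in> {1..x}" "p \<in> prime_factors n" "v = p \<or> v = multiplicity p n"
    | (c) n where "n \<in> {1..x}" "v = mark n"
    unfolding stored_ints_def by (auto simp del: upt_Suc simp: less_Suc_eq_le)
  then show ?thesis
  proof cases
    case a
    then show ?thesis using spf_le[of n] by auto
  next
    case b
    have "p \<le> n" using b pf_le by auto
    moreover have "multiplicity p n \<le> n" using b by (intro mult_le) auto
    ultimately show ?thesis using b by auto
  next
    case c
    then show ?thesis by (auto simp: mark_def)
  qed
qed

lemma bitlen_props:
  assumes "x \<ge> (3::nat)"
  shows "bitlen x \<ge> 2" "2 ^ (bitlen x - 1) \<le> x"
proof -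
  have ex: "x < 2 ^ x" by (rule less_exp)
  have lt: "x < 2 ^ bitlen x" unfolding bitlen_def by (rule LeastI[of _ x]) (rule ex)
  show k2: "bitlen x \<ge> 2"
  proof (rule ccontr)
    assume "\<not> bitlen x \<ge> 2"
    then have "bitlen x \<le> 1" by auto
    then have "(2::nat) ^ bitlen x \<le> 2 ^ 1" by (intro power_increasing) auto
    then show False using lt assms by auto
  qed
  have "\<not> x < 2 ^ (bitlen x - 1)"
  proof
    assume "x < 2 ^ (bitlen x - 1)"
    then have "bitlen x \<le> bitlen x - 1" unfolding bitlen_def by (rule Least_le)
    then show False using k2 by auto
  qed
  then show "2 ^ (bitlen x - 1) \<le> x" by auto
qed

lemma bitlen_ln:
  assumes "x \<ge> (3::nat)"
  shows "ln (real (bitlen x)) \<le> ln 3 + ln (ln (real x))"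
proof -
  define k where "k = bitlen x"
  have k2: "k \<ge> 2" and p: "2 ^ (k - 1) \<le> x" using bitlen_props[OF assms] by (auto simp: k_def)
  have "real ((2::nat) ^ (k - 1)) \<le> real x" using p by (simp only: of_nat_le_iff)
  then have "(2::real) ^ (k - 1) \<le> real x" by simp
  then have "ln ((2::real) ^ (k - 1)) \<le> ln (real x)" by (intro ln_mono) auto
  then have h: "real (k - 1) * ln 2 \<le> ln (real x)" by (simp add: ln_realpow)
  have "real k \<le> 2 * real (k - 1)" using k2 by auto
  then have "real k * ln 2 \<le> (2 * real (k - 1)) * ln 2" by (intro mult_right_mono) auto
  also have "\<dots> = 2 * (real (k - 1) * ln 2)" by simp
  also have "\<dots> \<le> 2 * ln (real x)" using h by linarith
  finally have a: "real k * ln 2 \<le> 2 * ln (real x)" .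
  have "real k * (2/3) \<le> real k * ln 2" using ln2_ge_two_thirds by (intro mult_left_mono) auto
  then have "real k * (2/3) \<le> 2 * ln (real x)" using a by linarith
  then have kb: "real k \<le> 3 * ln (real x)" by simp
  have lx: "0 < ln (real x)" using assms by simp
  have "ln (real k) \<le> ln (3 * ln (real x))" using kb k2 by (intro ln_mono) auto
  also have "\<dots> = ln 3 + ln (ln (real x))" using lx by (simp add: ln_mult)
  finally show ?thesis unfolding k_def .
qed

lemma lnln3: "0 < ln (ln (3::real))"
proof -
  have "exp 1 < (3::real)" using e_less_272 by simp
  then have "ln (exp 1) < ln (3::real)" by (subst ln_less_cancel_iff) auto
  then have "1 < ln (3::real)" by simp
  then show ?thesis by simp
qed

theorem theorem6p1:
  fixes M A D G :: "nat \<Rightarrow> real"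
  assumes M_lin: "\<forall>k\<ge>1. real k \<le> M k"
    and A_lin: "\<exists>Ca. \<forall>k\<ge>1. A k \<le> Ca * real k"
    and D_mult: "\<exists>Cd. \<forall>k\<ge>1. D k \<le> Cd * M k"
    and G_gcd: "\<exists>Cg. \<forall>k\<ge>2. G k \<le> Cg * M k * ln (real k)"
  shows "\<exists>C. \<forall>x::nat. x \<ge> 3 \<longrightarrow>
           real (length (stored_ints x)) \<le> C * real x * ln (ln (real x))
         \<and> (\<forall>v\<in>set (stored_ints x). v \<le> x)
         \<and> trace_cost M A D G (alg_trace x) \<le> C * real x * M (bitlen x) * ln (ln (real x))"
proof -
  obtain Ca where Ca: "\<forall>k\<ge>1. A k \<le> Ca * real k" using A_lin by blast
  obtain Cd where Cd: "\<forall>k\<ge>1. D k \<le> Cd * M k" using D_mult by blast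
  obtain Cg where Cg: "\<forall>k\<ge>2. G k \<le> Cg * M k * ln (real k)" using G_gcd by blast
  define Ca' where "Ca' = max Ca 0"
  define Cd' where "Cd' = max Cd 0"
  define Cg' where "Cg' = max Cg 0"
  define c0 where "c0 = Ca' + Cd' + 1"
  define L3 where "L3 = ln (ln (3::real))"
  define K1 where "K1 = (2 - 2 * ln (ln 2)) / L3 + 2"
  define C1 where "C1 = 2 / L3 + 2 * K1"
  define C2 where "C2 = c0 * (4 / L3 + 10 * K1) + Cg' * (ln 3 / L3 + 1)"
  have L3: "L3 > 0" unfolding L3_def by (rule lnln3)
  have lnln2: "ln (ln (2::real)) < 0" using ln_2_less_1 by simp
  have K1: "K1 \<ge> 0"
  proof -
    have "2 - 2 * ln (ln (2::real)) \<ge> 0" using lnln2 by linarith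
    then have "(2 - 2 * ln (ln (2::real))) / L3 \<ge> 0" using L3 by simp
    then show ?thesis unfolding K1_def by linarith
  qed
  have C1: "C1 \<ge> 0" unfolding C1_def using L3 K1 by auto
  have c0: "c0 \<ge> 1" unfolding c0_def Ca'_def Cd'_def by auto
  have Cg'0: "Cg' \<ge> 0" unfolding Cg'_def by auto
  have ln3: "ln (3::real) \<ge> 0" by simp
  have C2: "C2 \<ge> 0" unfolding C2_def using c0 K1 L3 Cg'0 ln3 by (auto intro!: add_nonneg_nonneg mult_nonneg_nonneg)
  show ?thesis
  proof (rule exI[of _ "C1 + C2"], intro allI impI conjI)
    fix x :: nat assume x3: "x \<ge> 3"
    define LL where "LL = ln (ln (real x))"
    define T where "T = (\<Sum>p | prime p \<and> p \<le> x. 1 / real p)"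
    have LL: "LL \<ge> L3" unfolding LL_def L3_def using x3 by simp
    have LL0: "LL > 0" using LL L3 by linarith
    have T0: "T \<ge> 0" unfolding T_def by (intro sum_nonneg) auto
    have TK: "T \<le> K1 * LL"
    proof -
      have "T \<le> (2 - 2 * ln (ln 2)) + 2 * LL" unfolding T_def LL_def using T_bound2[of x] x3 by simp
      also have "2 - 2 * ln (ln 2) \<le> ((2 - 2 * ln (ln 2)) / L3) * LL"
      proof -
        have "(2 - 2 * ln (ln (2::real))) * 1 \<le> (2 - 2 * ln (ln 2)) * (LL / L3)"
        proof (rule mult_left_mono)
          show "1 \<le> LL / L3" using LL L3 by simp
          show "0 \<le> 2 - 2 * ln (ln (2::real))" using lnln2 by linarith
        qed
        then show ?thesis by simp
      qed
      finally show ?thesis unfolding K1_def by (simp add: algebra_simps)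
    qed
    have x0: "real x \<ge> 0" by simp
    have "real (length (stored_ints x)) = 2 * real x + 2 * real (\<Sum>n=1..x. card (prime_factors n))"
      unfolding len_stored by simp
    also have "\<dots> \<le> 2 * real x + 2 * (real x * T)" unfolding T_def using omega_sum_real[of x] by simp
    also have "\<dots> \<le> C1 * real x * LL"
    proof -
      have "2 * real x * 1 \<le> 2 * real x * (LL / L3)" using LL L3 by (intro mult_left_mono) auto
      moreover have "2 * (real x * T) \<le> 2 * (real x * (K1 * LL))" using TK by (intro mult_left_mono) auto
      ultimately show ?thesis unfolding C1_def by (simp add: algebra_simps)
    qed
    also have "\<dots> \<le> (C1 + C2) * real x * LL" using C2 x0 LL0
      by (intro mult_right_mono) auto
    finally show "real (length (stored_ints x)) \<le> (C1 + C2) * real x * ln (ln (real x))" unfolding LL_def .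
  next
    fix x :: nat assume "x \<ge> 3"
    show "\<forall>v\<in>set (stored_ints x). v \<le> x" using stored_le by blast
  next
    fix x :: nat assume x3: "x \<ge> 3"
    define LL where "LL = ln (ln (real x))"
    define T where "T = (\<Sum>p | prime p \<and> p \<le> x. 1 / real p)"
    define k where "k = bitlen x"
    have LL: "LL \<ge> L3" unfolding LL_def L3_def using x3 by simp
    have LL0: "LL > 0" using LL L3 by linarith
    have T0: "T \<ge> 0" unfolding T_def by (intro sum_nonneg) auto
    have TK: "T \<le> K1 * LL"
    proof -
      have "T \<le> (2 - 2 * ln (ln 2)) + 2 * LL" unfolding T_def LL_def using T_bound2[of x] x3 by simp
      also have "2 - 2 * ln (ln 2) \<le> ((2 - 2 * ln (ln 2)) / L3) * LL"
      proof -
        have "(2 - 2 * ln (ln (2::real))) * 1 \<le> (2 - 2 * ln (ln 2)) * (LL / L3)"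
        proof (rule mult_left_mono)
          show "1 \<le> LL / L3" using LL L3 by simp
          show "0 \<le> 2 - 2 * ln (ln (2::real))" using lnln2 by linarith
        qed
        then show ?thesis by simp
      qed
      finally show ?thesis unfolding K1_def by (simp add: algebra_simps)
    qed
    have x0: "real x \<ge> 0" by simp
    have k2: "k \<ge> 2" unfolding k_def using bitlen_props[OF x3] by simp
    have Mk: "M k \<ge> 1"
    proof -
      have "real k \<le> M k" using M_lin k2 by auto
      moreover have "1 \<le> real k" using k2 by simp
      ultimately show ?thesis by linarith
    qed
    have lnk0: "ln (real k) \<ge> 0" using k2 by simp
    have lnk: "ln (real k) \<le> (ln 3 / L3 + 1) * LL"
    proof -
      have "ln (real k) \<le> ln 3 + LL" unfolding k_def LL_def by (rule bitlen_ln[OF x3])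
      also have "ln 3 \<le> (ln 3 / L3) * LL"
      proof -
        have "ln (3::real) * 1 \<le> ln 3 * (LL / L3)" using LL L3 ln3 by (intro mult_left_mono) auto
        then show ?thesis by simp
      qed
      finally show ?thesis by (simp add: algebra_simps)
    qed
    define c where "c = c0 * M k"
    define g where "g = Cg' * M k * ln (real k)"
    define w where "w = (\<lambda>q. case q of Gcdop _ \<Rightarrow> g | _ \<Rightarrow> c)"
    have c_ge: "c \<ge> 0" unfolding c_def using c0 Mk by auto
    have g_ge: "g \<ge> 0" unfolding g_def using Cg'0 Mk lnk0 by auto
    have setk: "set (alg_trace x) \<subseteq> {Arith k, Mult k, Divi k, Gcdop k}"
      unfolding k_def by (auto simp: alg_trace_def sieve_trace_def factor_trace_def mark_trace_def Let_def split: if_splits)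
    have Ak: "A k \<le> c"
    proof -
      have "A k \<le> Ca * real k" using Ca k2 by auto
      also have "\<dots> \<le> Ca' * real k" unfolding Ca'_def by (intro mult_right_mono) auto
      also have "\<dots> \<le> Ca' * M k" using M_lin k2 unfolding Ca'_def by (intro mult_left_mono) auto
      also have "\<dots> \<le> c0 * M k" unfolding c0_def using Mk unfolding Cd'_def by (intro mult_right_mono) auto
      finally show ?thesis unfolding c_def .
    qed
    have Mk': "M k \<le> c"
    proof -
      have "1 * M k \<le> c0 * M k" using c0 Mk by (intro mult_right_mono) auto
      then show ?thesis unfolding c_def by simp
    qed
    have Dk: "D k \<le> c"
    proof -
      have "D k \<le> Cd * M k" using Cd k2 by auto
      also have "\<dots> \<le> Cd' * M k" unfolding Cd'_def using Mk by (intro mult_right_mono) auto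
      also have "\<dots> \<le> c0 * M k" unfolding c0_def using Mk unfolding Ca'_def by (intro mult_right_mono) auto
      finally show ?thesis unfolding c_def .
    qed
    have Gk: "G k \<le> g"
    proof -
      have "G k \<le> Cg * M k * ln (real k)" using Cg k2 by auto
      also have "\<dots> \<le> Cg' * M k * ln (real k)" unfolding Cg'_def using Mk lnk0
        by (intro mult_right_mono) auto
      finally show ?thesis unfolding g_def .
    qed
    have "trace_cost M A D G (alg_trace x) \<le> sum_list (map w (alg_trace x))"
      unfolding trace_cost_def
    proof (rule sum_list_mono)
      fix q assume "q \<in> set (alg_trace x)"
      then have "q \<in> {Arith k, Mult k, Divi k, Gcdop k}" using setk by blast
      then show "prim_cost M A D G q \<le> w q" using Ak Mk' Dk Gk unfolding w_def by auto
    qed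
    also have "\<dots> \<le> 4 * real x * c + 10 * c * real x * T + g * real x"
      unfolding T_def
      by (subst w_alg[of w k c g]) (use alg_bound[OF c_ge] in \<open>auto simp: w_def k_def\<close>)
    also have "\<dots> \<le> M k * real x * LL * C2"
    proof -
      have "4 + 10 * T \<le> (4 / L3 + 10 * K1) * LL"
      proof -
        have "4 * 1 \<le> 4 * (LL / L3)" using LL L3 by (intro mult_left_mono) auto
        then show ?thesis using TK by (simp add: algebra_simps)
      qed
      then have a: "c0 * (4 + 10 * T) \<le> c0 * ((4 / L3 + 10 * K1) * LL)" using c0 by (intro mult_left_mono) auto
      have b: "Cg' * ln (real k) \<le> Cg' * ((ln 3 / L3 + 1) * LL)" using lnk Cg'0 by (intro mult_left_mono) auto
      have "c0 * (4 + 10 * T) + Cg' * ln (real k) \<le> LL * C2" using a b unfolding C2_def by (simp add: algebra_simps)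
      then have "(M k * real x) * (c0 * (4 + 10 * T) + Cg' * ln (real k)) \<le> (M k * real x) * (LL * C2)"
        using Mk x0 by (intro mult_left_mono) auto
      then show ?thesis unfolding c_def g_def by (simp add: algebra_simps)
    qed
    also have "\<dots> \<le> (C1 + C2) * real x * M k * LL"
    proof -
      have "M k * real x * LL * C2 \<le> M k * real x * LL * (C1 + C2)"
        using Mk x0 LL0 C1 by (intro mult_left_mono) auto
      then show ?thesis by (simp add: algebra_simps)
    qed
    finally show "trace_cost M A D G (alg_trace x) \<le> (C1 + C2) * real x * M (bitlen x) * ln (ln (real x))"
      unfolding k_def LL_def .
  qed
qed

end
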